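(* Let $G$ be a bus graph containing a $(B,o)$-flipper (as defined below), a $\mathcal{C}$-vertex $i$ joined to the flipper by the edge $(B,i)$, and a $\mathcal{B}$-vertex $O$ joined to the flipper by the edge $(O,o)$. Then in any realization $\Gamma$ of $G$: (1) $\Gamma((B,i))$ and $\Gamma((O,o))$ are perpendicular; (2) $\Gamma(B)$ and $\Gamma(O)$ are perpendicular.
   Context: A bus graph is a finite bipartite graph $G=(\mathcal{B},\mathcal{C};\mathcal{E})$ with $\deg(c)\le 4$ for all $c\in\mathcal{C}$. A realization $\Gamma$ of $G$ in the integer grid is a drawing such that: (1) each $B\in\mathcal{B}$ is drawn as a closed line segment $\Gamma(B)$ along a grid line (a "bus"); (2) each $c\in\mathcal{C}$ is drawn as a grid point $\Gamma(c)$; (3) each edge $(B,c)\in\mathcal{E}$ is drawn as a closed line segment along a grid line between a point of $\Gamma(B)$ and $\Gamma(c)$, perpendicular to $\Gamma(B)$, containing no connectors or buses other than $\Gamma(B)$ and $\Gamma(c)$ (edges may cross other edges); (4) no two buses or connectors intersect. An $(A,B)$-perp consists of three distinct $\mathcal{C}$-vertices $x,y,z$, five distinct $\mathcal{B}$-vertices $A,A',B,B',C$, and the twelve edges $(A,x),(A',x),(B,x),(B',x)$, $(A,y),(A',y),(B,y),(C,y)$, $(A,z),(A',z),(B',z),(C,z)$. A $(B,o)$-flipper consists of an $(A,B)$-perp together with one additional $\mathcal{C}$-vertex $o$ and two additional edges $(B,o)$ and $(B',o)$. *)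

theory Defs
  imports Main
begin

text \<open>A bus is drawn as a closed axis-parallel
segment with integer data: orientation (horizontal or vertical), the coordinate of
the grid line carrying it, and the interval [lo, hi] along that line.\<close>

type_synonym pt = "int \<times> int"

record bus_seg =
  horiz :: bool
  gline :: int
  lo :: int
  hi :: int

definition seg_pts :: "bus_seg \<Rightarrow> pt set" where
  "seg_pts s = (if horiz s then {(x, gline s) | x. lo s \<le> x \<and> x \<le> hi s}
                else {(gline s, y) | y. lo s \<le> y \<and> y \<le> hi s})"

definition foot :: "bus_seg \<Rightarrow> pt \<Rightarrow> pt" where
  "foot s p = (if horiz s then (fst p, gline s) else (gline s, snd p))"

definition edge_pts :: "bus_seg \<Rightarrow> pt \<Rightarrow> pt set" where
  "edge_pts s p = (if horiz s
      then {(fst p, y) | y. min (gline s) (snd p) \<le> y \<and> y \<le> max (gline s) (snd p)}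
      else {(x, snd p) | x. min (gline s) (fst p) \<le> x \<and> x \<le> max (gline s) (fst p)})"

definition edge_horiz :: "bus_seg \<Rightarrow> bool" where
  "edge_horiz s = (\<not> horiz s)"

definition bus_graph :: "'b set \<Rightarrow> 'c set \<Rightarrow> ('b \<times> 'c) set \<Rightarrow> bool" where
  "bus_graph Bs Cs E \<longleftrightarrow> finite Bs \<and> finite Cs \<and> E \<subseteq> Bs \<times> Cs \<and>
     (\<forall>c\<in>Cs. card {b. (b, c) \<in> E} \<le> 4)"

definition realization ::
  "'b set \<Rightarrow> 'c set \<Rightarrow> ('b \<times> 'c) set \<Rightarrow> ('b \<Rightarrow> bus_seg) \<Rightarrow> ('c \<Rightarrow> pt) \<Rightarrow> bool" where
  "realization Bs Cs E \<Gamma>b \<Gamma>c \<longleftrightarrow>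
     (\<forall>b\<in>Bs. lo (\<Gamma>b b) \<le> hi (\<Gamma>b b)) \<and>
     (\<forall>(b, c)\<in>E. foot (\<Gamma>b b) (\<Gamma>c c) \<in> seg_pts (\<Gamma>b b)) \<and>
     (\<forall>(b, c)\<in>E. \<forall>c'\<in>Cs. c' \<noteq> c \<longrightarrow> \<Gamma>c c' \<notin> edge_pts (\<Gamma>b b) (\<Gamma>c c)) \<and>
     (\<forall>(b, c)\<in>E. \<forall>b'\<in>Bs. b' \<noteq> b \<longrightarrow>
         edge_pts (\<Gamma>b b) (\<Gamma>c c) \<inter> seg_pts (\<Gamma>b b') = {}) \<and>
     inj_on \<Gamma>c Cs \<and>
     (\<forall>b\<in>Bs. \<forall>b'\<in>Bs. b \<noteq> b' \<longrightarrow> seg_pts (\<Gamma>b b) \<inter> seg_pts (\<Gamma>b b') = {}) \<and>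
     (\<forall>b\<in>Bs. \<forall>c\<in>Cs. \<Gamma>c c \<notin> seg_pts (\<Gamma>b b))"

definition perp ::
  "('b \<times> 'c) set \<Rightarrow> 'c \<Rightarrow> 'c \<Rightarrow> 'c \<Rightarrow> 'b \<Rightarrow> 'b \<Rightarrow> 'b \<Rightarrow> 'b \<Rightarrow> 'b \<Rightarrow> bool" where
  "perp E x y z A A' B B' C \<longleftrightarrow>
     distinct [x, y, z] \<and> distinct [A, A', B, B', C] \<and>
     {(A,x),(A',x),(B,x),(B',x),(A,y),(A',y),(B,y),(C,y),(A,z),(A',z),(B',z),(C,z)} \<subseteq> E"

definition flipper ::
  "('b \<times> 'c) set \<Rightarrow> 'c \<Rightarrow> 'c \<Rightarrow> 'c \<Rightarrow> 'c \<Rightarrow> 'b \<Rightarrow> 'b \<Rightarrow> 'b \<Rightarrow> 'b \<Rightarrow> 'b \<Rightarrow> bool" where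
  "flipper E x y z ov A A' B B' C \<longleftrightarrow>
     perp E x y z A A' B B' C \<and> ov \<notin> {x, y, z} \<and> (B, ov) \<in> E \<and> (B', ov) \<in> E"

end

theory Submission
  imports Defs
begin
definition crd :: "bus_seg \<Rightarrow> pt \<Rightarrow> int" where
  "crd s p = (if horiz s then snd p else fst p)"

lemma off_line:
  assumes bg: "bus_graph Bs Cs E" and r: "realization Bs Cs E \<Gamma>b \<Gamma>c" and e: "(b, c) \<in> E"
  shows "gline (\<Gamma>b b) \<noteq> crd (\<Gamma>b b) (\<Gamma>c c)"
proof
  assume h: "gline (\<Gamma>b b) = crd (\<Gamma>b b) (\<Gamma>c c)"
  have bc: "b \<in> Bs" "c \<in> Cs" using bg e unfolding bus_graph_def by auto
  have "foot (\<Gamma>b b) (\<Gamma>c c) \<in> seg_pts (\<Gamma>b b)" using r e unfolding realization_def by auto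
  moreover have "foot (\<Gamma>b b) (\<Gamma>c c) = \<Gamma>c c" using h unfolding foot_def crd_def
    by (cases "\<Gamma>c c") (auto split: if_splits)
  ultimately show False using r bc unfolding realization_def by auto
qed

lemma realD:
  assumes "realization Bs Cs E \<Gamma>b \<Gamma>c"
  shows "\<And>b c. (b,c) \<in> E \<Longrightarrow> foot (\<Gamma>b b) (\<Gamma>c c) \<in> seg_pts (\<Gamma>b b)"
    and "\<And>b c b'. (b,c) \<in> E \<Longrightarrow> b' \<in> Bs \<Longrightarrow> b' \<noteq> b \<Longrightarrow> edge_pts (\<Gamma>b b) (\<Gamma>c c) \<inter> seg_pts (\<Gamma>b b') = {}"
    and "\<And>b b'. b \<in> Bs \<Longrightarrow> b' \<in> Bs \<Longrightarrow> b \<noteq> b' \<Longrightarrow> seg_pts (\<Gamma>b b) \<inter> seg_pts (\<Gamma>b b') = {}"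
  using assms unfolding realization_def by blast+

lemma foot_in_edge:
  assumes "horiz s1 = horiz s2" "min (gline s2) (crd s2 p) \<le> gline s1" "gline s1 \<le> max (gline s2) (crd s2 p)"
  shows "foot s1 p \<in> edge_pts s2 p"
proof (cases "horiz s1")
  case True
  then have "foot s1 p = (fst p, gline s1)" "horiz s2" using assms(1) by (simp_all add: foot_def)
  moreover have "crd s2 p = snd p" using \<open>horiz s2\<close> by (simp add: crd_def)
  ultimately show ?thesis using assms(2,3) unfolding edge_pts_def by simp
next
  case False
  then have "foot s1 p = (gline s1, snd p)" "\<not> horiz s2" using assms(1) by (simp_all add: foot_def)
  moreover have "crd s2 p = fst p" using \<open>\<not> horiz s2\<close> by (simp add: crd_def)
  ultimately show ?thesis using assms(2,3) unfolding edge_pts_def by simp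
qed

lemma opp_side:
  assumes bg: "bus_graph Bs Cs E" and r: "realization Bs Cs E \<Gamma>b \<Gamma>c"
    and e1: "(b1, c) \<in> E" and e2: "(b2, c) \<in> E" and ne: "b1 \<noteq> b2"
    and hh: "horiz (\<Gamma>b b1) = horiz (\<Gamma>b b2)"
  shows "(gline (\<Gamma>b b1) - crd (\<Gamma>b b1) (\<Gamma>c c)) * (gline (\<Gamma>b b2) - crd (\<Gamma>b b2) (\<Gamma>c c)) < 0"
proof (rule ccontr)
  assume neg: "\<not> ?thesis"
  define s1 where "s1 = \<Gamma>b b1"
  define s2 where "s2 = \<Gamma>b b2"
  define p where "p = \<Gamma>c c"
  define k where "k = crd s1 p"
  have k2: "crd s2 p = k" using hh unfolding k_def crd_def s1_def s2_def by auto
  have n1: "gline s1 \<noteq> k" using off_line[OF bg r e1] unfolding s1_def k_def p_def .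
  have n2: "gline s2 \<noteq> k" using off_line[OF bg r e2] k2 unfolding s2_def p_def by simp
  have b12: "b1 \<in> Bs" "b2 \<in> Bs" using bg e1 e2 unfolding bus_graph_def by auto
  have f1: "foot s1 p \<in> seg_pts s1" using realD(1)[OF r e1] unfolding s1_def p_def .
  have f2: "foot s2 p \<in> seg_pts s2" using realD(1)[OF r e2] unfolding s2_def p_def .
  have d12: "seg_pts s1 \<inter> seg_pts s2 = {}" using realD(3)[OF r b12 ne] unfolding s1_def s2_def .
  have ed2: "edge_pts s2 p \<inter> seg_pts s1 = {}" using realD(2)[OF r e2 b12(1)] ne unfolding s1_def s2_def p_def by simp
  have ed1: "edge_pts s1 p \<inter> seg_pts s2 = {}" using realD(2)[OF r e1 b12(2)] ne unfolding s1_def s2_def p_def by simp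
  have hh': "horiz s1 = horiz s2" using hh unfolding s1_def s2_def .
  have same: "\<not> (gline s1 - k) * (gline s2 - k) < 0" using neg k2 unfolding s1_def s2_def p_def k_def by simp
  have "gline s1 = gline s2 \<or> (k < gline s1 \<and> gline s1 < gline s2 \<or> gline s2 < gline s1 \<and> gline s1 < k)
    \<or> (k < gline s2 \<and> gline s2 < gline s1 \<or> gline s1 < gline s2 \<and> gline s2 < k)"
  proof -
    { assume "k < gline s1" "gline s2 < k"
      then have "(gline s1 - k) * (gline s2 - k) < 0" by (simp add: mult_pos_neg)
      with same have False by simp }
    moreover
    { assume "gline s1 < k" "k < gline s2"
      then have "(gline s1 - k) * (gline s2 - k) < 0" by (simp add: mult_neg_pos)
      with same have False by simp }
    ultimately show ?thesis using n1 n2 by (smt (verit))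
  qed
  then consider "gline s1 = gline s2" | "k < gline s1 \<and> gline s1 < gline s2 \<or> gline s2 < gline s1 \<and> gline s1 < k"
    | "k < gline s2 \<and> gline s2 < gline s1 \<or> gline s1 < gline s2 \<and> gline s2 < k"
    by blast
  then show False
  proof cases
    case 1
    then have "foot s1 p = foot s2 p" using hh' unfolding foot_def by auto
    then show ?thesis using f1 f2 d12 by auto
  next
    case 2
    have "foot s1 p \<in> edge_pts s2 p" using 2 hh' k2 by (intro foot_in_edge) auto
    then show ?thesis using f1 ed2 by auto
  next
    case 3
    have "foot s2 p \<in> edge_pts s1 p" using 3 hh' k2 unfolding k_def by (intro foot_in_edge) auto
    then show ?thesis using f2 ed1 by auto
  qed
qed
lemma no_three:
  assumes bg: "bus_graph Bs Cs E" and r: "realization Bs Cs E \<Gamma>b \<Gamma>c"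
    and e1: "(b1, c) \<in> E" and e2: "(b2, c) \<in> E" and e3: "(b3, c) \<in> E"
    and ne: "b1 \<noteq> b2" "b1 \<noteq> b3" "b2 \<noteq> b3"
  shows "\<not> (horiz (\<Gamma>b b1) = horiz (\<Gamma>b b2) \<and> horiz (\<Gamma>b b2) = horiz (\<Gamma>b b3))"
proof
  assume h: "horiz (\<Gamma>b b1) = horiz (\<Gamma>b b2) \<and> horiz (\<Gamma>b b2) = horiz (\<Gamma>b b3)"
  define d1 where "d1 = gline (\<Gamma>b b1) - crd (\<Gamma>b b1) (\<Gamma>c c)"
  define d2 where "d2 = gline (\<Gamma>b b2) - crd (\<Gamma>b b2) (\<Gamma>c c)"
  define d3 where "d3 = gline (\<Gamma>b b3) - crd (\<Gamma>b b3) (\<Gamma>c c)"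
  have "d1 * d2 < 0" using opp_side[OF bg r e1 e2 ne(1)] h unfolding d1_def d2_def by simp
  moreover have "d1 * d3 < 0" using opp_side[OF bg r e1 e3 ne(2)] h unfolding d1_def d3_def by simp
  moreover have "d2 * d3 < 0" using opp_side[OF bg r e2 e3 ne(3)] h unfolding d2_def d3_def by simp
  ultimately show False
    unfolding mult_less_0_iff by linarith
qed

theorem lemma4:
  fixes Bs :: "'b set" and Cs :: "'c set" and E :: "('b \<times> 'c) set"
    and \<Gamma>b :: "'b \<Rightarrow> bus_seg" and \<Gamma>c :: "'c \<Rightarrow> pt"
  assumes "bus_graph Bs Cs E"
    and "flipper E x y z ov A A' B B' C"
    and "i \<notin> {x, y, z, ov}" and "(B, i) \<in> E"
    and "OB \<notin> {A, A', B, B', C}" and "(OB, ov) \<in> E"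
    and "realization Bs Cs E \<Gamma>b \<Gamma>c"
  shows "edge_horiz (\<Gamma>b B) \<noteq> edge_horiz (\<Gamma>b OB) \<and> horiz (\<Gamma>b B) \<noteq> horiz (\<Gamma>b OB)"
proof -
  note bg = assms(1) and r = assms(7)
  have fl: "distinct [A, A', B, B', C]"
    "{(A,x),(A',x),(B,x),(B',x),(A,y),(A',y),(B,y),(C,y),(A,z),(A',z),(B',z),(C,z)} \<subseteq> E"
    "(B, ov) \<in> E" "(B', ov) \<in> E"
    using assms(2) unfolding flipper_def perp_def by blast+
  have x1: "\<not> (horiz (\<Gamma>b A) = horiz (\<Gamma>b A') \<and> horiz (\<Gamma>b A') = horiz (\<Gamma>b B))"
    by (rule no_three[OF bg r, where c=x]) (use fl in auto)
  have x2: "\<not> (horiz (\<Gamma>b A) = horiz (\<Gamma>b A') \<and> horiz (\<Gamma>b A') = horiz (\<Gamma>b B'))"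
    by (rule no_three[OF bg r, where c=x]) (use fl in auto)
  have x3: "\<not> (horiz (\<Gamma>b A) = horiz (\<Gamma>b B) \<and> horiz (\<Gamma>b B) = horiz (\<Gamma>b B'))"
    by (rule no_three[OF bg r, where c=x]) (use fl in auto)
  have x4: "\<not> (horiz (\<Gamma>b A') = horiz (\<Gamma>b B) \<and> horiz (\<Gamma>b B) = horiz (\<Gamma>b B'))"
    by (rule no_three[OF bg r, where c=x]) (use fl in auto)
  have y1: "\<not> (horiz (\<Gamma>b A) = horiz (\<Gamma>b B) \<and> horiz (\<Gamma>b B) = horiz (\<Gamma>b C))"
    by (rule no_three[OF bg r, where c=y]) (use fl in auto)
  have y2: "\<not> (horiz (\<Gamma>b A') = horiz (\<Gamma>b B) \<and> horiz (\<Gamma>b B) = horiz (\<Gamma>b C))"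
    by (rule no_three[OF bg r, where c=y]) (use fl in auto)
  have z1: "\<not> (horiz (\<Gamma>b A) = horiz (\<Gamma>b B') \<and> horiz (\<Gamma>b B') = horiz (\<Gamma>b C))"
    by (rule no_three[OF bg r, where c=z]) (use fl in auto)
  have z2: "\<not> (horiz (\<Gamma>b A') = horiz (\<Gamma>b B') \<and> horiz (\<Gamma>b B') = horiz (\<Gamma>b C))"
    by (rule no_three[OF bg r, where c=z]) (use fl in auto)
  have o1: "\<not> (horiz (\<Gamma>b B) = horiz (\<Gamma>b B') \<and> horiz (\<Gamma>b B') = horiz (\<Gamma>b OB))"
    by (rule no_three[OF bg r, where c=ov]) (use fl assms(5,6) in auto)
  have "horiz (\<Gamma>b B) = horiz (\<Gamma>b B')" using x1 x2 x3 x4 y1 y2 z1 z2 by blast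
  then have "horiz (\<Gamma>b B) \<noteq> horiz (\<Gamma>b OB)" using o1 by blast
  then show ?thesis unfolding edge_horiz_def by simp
qed

end
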